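(* Let $G=(V,E,w)$ be a weighted graph with matrix $W$, and let $\theta\in[0,1]^V$ satisfy $W\theta\ge\mathbf 1$ coordinatewise. Let $\mathcal{D}$ be the distribution of a random subset $S\subseteq V$ that includes each $v\in V$ independently with probability $\theta_v$. Then (i) $\mathbb{E}_{S\sim\mathcal{D}}[|S|]=\|\theta\|_1$; (ii) $\mathbb{E}_{S\sim\mathcal{D}}[\mathrm{Induced}(S)]\le\|\theta\|_1^2+\|\theta\|_1$; (iii) $\mathbb{E}_{S\sim\mathcal{D}}[\mathrm{Cut}(S,V\setminus S)]\ge|V|-2\|\theta\|_1$.
   Context: $W=(W_{u,v})_{u,v\in V}$ is a symmetric matrix with entries in $[0,1]$ and $W_{v,v}=1$; the weighted graph has edges $\{u,v\}$, $u\neq v$, with $W_{u,v}>0$ and weight $W_{u,v}$. For $S\subseteq V$: $\mathrm{Cut}(S,V\setminus S)=\sum_{u\in S}\sum_{v\in V\setminus S}W_{u,v}$ and $\mathrm{Induced}(S)=\sum_{u\in S}\sum_{v\in S}W_{u,v}$. *)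

theory Defs
  imports "HOL-Probability.Probability"
begin

definition Cut :: "('a \<Rightarrow> 'a \<Rightarrow> real) \<Rightarrow> 'a set \<Rightarrow> 'a set \<Rightarrow> real" where
  "Cut W S T = (\<Sum>u\<in>S. \<Sum>v\<in>T. W u v)"

definition Induced :: "('a \<Rightarrow> 'a \<Rightarrow> real) \<Rightarrow> 'a set \<Rightarrow> real" where
  "Induced W S = (\<Sum>u\<in>S. \<Sum>v\<in>S. W u v)"

definition rand_subset :: "'a set \<Rightarrow> ('a \<Rightarrow> real) \<Rightarrow> 'a set pmf" where
  "rand_subset V \<theta> = map_pmf (\<lambda>f. {v\<in>V. f v}) (Pi_pmf V False (\<lambda>v. bernoulli_pmf (\<theta> v)))"

end

theory Submission imports Defs begin

lemma finite_set_Pi: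
  assumes "finite V"
  shows "finite (set_pmf (Pi_pmf V False (p :: _ \<Rightarrow> bool pmf)))"
proof -
  have "set_pmf (Pi_pmf V False p) \<subseteq> PiE_dflt V False (\<lambda>_. UNIV)"
    using set_Pi_pmf_subset[OF assms, of False p] by (auto simp: PiE_dflt_def)
  moreover have "finite (PiE_dflt V False (\<lambda>_. UNIV :: bool set))"
    using assms by (intro finite_PiE_dflt) auto
  ultimately show ?thesis by (rule finite_subset)
qed

lemma E_single:
  assumes "finite V" "u \<in> V" "0 \<le> \<theta> u" "\<theta> u \<le> 1"
  shows "measure_pmf.expectation (Pi_pmf V False (\<lambda>v. bernoulli_pmf (\<theta> v))) (\<lambda>f. of_bool (f u)) = \<theta> u"
proof -
  have "measure_pmf.expectation (Pi_pmf V False (\<lambda>v. bernoulli_pmf (\<theta> v))) (\<lambda>f. of_bool (f u))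
     = measure_pmf.expectation (map_pmf (\<lambda>f. f u) (Pi_pmf V False (\<lambda>v. bernoulli_pmf (\<theta> v)))) (of_bool :: bool \<Rightarrow> real)"
    by (simp only: integral_map_pmf)
  also have "\<dots> = measure_pmf.expectation (bernoulli_pmf (\<theta> u)) (of_bool :: bool \<Rightarrow> real)"
    using Pi_pmf_component[OF assms(1), of u False] assms(2) by simp
  also have "\<dots> = \<theta> u" using assms by simp
  finally show ?thesis .
qed

lemma E_pair:
  assumes "finite V" "u \<in> V" "v \<in> V" "u \<noteq> v" "\<forall>v\<in>V. 0 \<le> \<theta> v \<and> \<theta> v \<le> 1"
  shows "measure_pmf.expectation (Pi_pmf V False (\<lambda>v. bernoulli_pmf (\<theta> v))) (\<lambda>f. of_bool (f u) * of_bool (f v)) = \<theta> u * \<theta> v"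
proof -
  define g where "g x b = (if x = u \<or> x = v then (of_bool b :: real) else 1)" for x b
  have prodeq: "(\<Prod>x\<in>V. g x (f x)) = of_bool (f u) * of_bool (f v)" for f
  proof -
    have "(\<Prod>x\<in>V. g x (f x)) = g u (f u) * (\<Prod>x\<in>V-{u}. g x (f x))"
      using assms by (simp add: prod.remove)
    also have "(\<Prod>x\<in>V-{u}. g x (f x)) = g v (f v) * (\<Prod>x\<in>V-{u}-{v}. g x (f x))"
      using assms by (intro prod.remove) auto
    also have "(\<Prod>x\<in>V-{u}-{v}. g x (f x)) = 1"
      by (rule prod.neutral) (auto simp: g_def)
    finally show ?thesis by (simp add: g_def)
  qed
  have "measure_pmf.expectation (Pi_pmf V False (\<lambda>v. bernoulli_pmf (\<theta> v))) (\<lambda>f. \<Prod>x\<in>V. g x (f x))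
     = (\<Prod>x\<in>V. measure_pmf.expectation (bernoulli_pmf (\<theta> x)) (g x))"
    by (rule expectation_prod_Pi_pmf) (auto simp: assms(1) g_def integrable_measure_pmf_finite)
  also have "\<dots> = (\<Prod>x\<in>V. if x = u \<or> x = v then \<theta> x else 1)"
    using assms(5) by (intro prod.cong refl) (auto simp: g_def)
  also have "\<dots> = \<theta> u * \<theta> v"
  proof -
    have "(\<Prod>x\<in>V. if x = u \<or> x = v then \<theta> x else 1) = \<theta> u * (\<Prod>x\<in>V-{u}. if x = u \<or> x = v then \<theta> x else 1)"
      using assms by (simp add: prod.remove)
    also have "(\<Prod>x\<in>V-{u}. if x = u \<or> x = v then \<theta> x else 1) = \<theta> v * (\<Prod>x\<in>V-{u}-{v}. if x = u \<or> x = v then \<theta> x else 1)"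
      using assms by (subst prod.remove[of _ v]) auto
    also have "(\<Prod>x\<in>V-{u}-{v}. if x = u \<or> x = v then \<theta> x else 1) = 1"
      by (rule prod.neutral) auto
    finally show ?thesis by simp
  qed
  finally show ?thesis by (simp add: prodeq)
qed

lemma sum_filter_of_bool:
  assumes "finite A"
  shows "(\<Sum>x\<in>{x\<in>A. P x}. g x) = (\<Sum>x\<in>A. of_bool (P x) * (g x :: real))"
proof -
  have "(\<Sum>x\<in>A. of_bool (P x) * (g x :: real)) = (\<Sum>x\<in>A. if P x then g x else 0)"
    by (intro sum.cong) auto
  also have "\<dots> = (\<Sum>x\<in>{x\<in>A. P x}. g x)" using assms by (simp add: sum.inter_filter)
  finally show ?thesis ..
qed

theorem lemma5p2:
  fixes V :: "'a set" and W :: "'a \<Rightarrow> 'a \<Rightarrow> real" and \<theta> :: "'a \<Rightarrow> real"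
  assumes finV: "finite V"
    and W_sym: "\<forall>u\<in>V. \<forall>v\<in>V. W u v = W v u"
    and W_range: "\<forall>u\<in>V. \<forall>v\<in>V. 0 \<le> W u v \<and> W u v \<le> 1"
    and W_diag: "\<forall>v\<in>V. W v v = 1"
    and \<theta>_range: "\<forall>v\<in>V. 0 \<le> \<theta> v \<and> \<theta> v \<le> 1"
    and cover: "\<forall>u\<in>V. (\<Sum>v\<in>V. W u v * \<theta> v) \<ge> 1"
  shows "(measure_pmf.expectation (rand_subset V \<theta>) (\<lambda>S. real (card S)) = (\<Sum>v\<in>V. \<bar>\<theta> v\<bar>))
    \<and> (measure_pmf.expectation (rand_subset V \<theta>) (\<lambda>S. Induced W S)
           \<le> (\<Sum>v\<in>V. \<bar>\<theta> v\<bar>)^2 + (\<Sum>v\<in>V. \<bar>\<theta> v\<bar>))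
    \<and> (measure_pmf.expectation (rand_subset V \<theta>) (\<lambda>S. Cut W S (V - S))
           \<ge> real (card V) - 2 * (\<Sum>v\<in>V. \<bar>\<theta> v\<bar>))"
proof -
  define P where "P = Pi_pmf V False (\<lambda>v. bernoulli_pmf (\<theta> v))"
  define t where "t = (\<Sum>v\<in>V. \<theta> v)"
  define e where "e u v = (if u = v then \<theta> u else \<theta> u * \<theta> v)" for u v
  have abs_t: "(\<Sum>v\<in>V. \<bar>\<theta> v\<bar>) = t"
    unfolding t_def using \<theta>_range by (intro sum.cong) auto
  have int: "integrable (measure_pmf P) f" for f :: "_ \<Rightarrow> real"
    unfolding P_def by (intro integrable_measure_pmf_finite finite_set_Pi finV)
  have E1: "measure_pmf.expectation P (\<lambda>f. of_bool (f u)) = \<theta> u" if "u \<in> V" for u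
    unfolding P_def using E_single[OF finV that] \<theta>_range that by auto
  have E2: "measure_pmf.expectation P (\<lambda>f. of_bool (f u) * of_bool (f v)) = e u v"
    if "u \<in> V" "v \<in> V" for u v
  proof (cases "u = v")
    case True
    have "(\<lambda>f. of_bool (f u) * of_bool (f v) :: real) = (\<lambda>f. of_bool (f u))" using True by auto
    thus ?thesis using E1[OF that(1)] True by (simp add: e_def)
  next
    case False thus ?thesis unfolding P_def e_def using E_pair[OF finV that False \<theta>_range] by simp
  qed
  have E3: "measure_pmf.expectation P (\<lambda>f. W u v * (of_bool (f u) * of_bool (f v))) = W u v * e u v"
    if "u \<in> V" "v \<in> V" for u v
    using E2[OF that] by simp
  have E4: "measure_pmf.expectation P (\<lambda>f. W u v * (of_bool (f u) * (1 - of_bool (f v)))) = W u v * (\<theta> u - e u v)"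
    if "u \<in> V" "v \<in> V" for u v
  proof -
    have "measure_pmf.expectation P (\<lambda>f. W u v * (of_bool (f u) * (1 - of_bool (f v))))
      = W u v * (measure_pmf.expectation P (\<lambda>f. of_bool (f u)) - measure_pmf.expectation P (\<lambda>f. of_bool (f u) * of_bool (f v)))"
      by (simp add: right_diff_distrib Bochner_Integration.integral_diff[OF int int])
    thus ?thesis using E1 E2 that by simp
  qed
  have map: "measure_pmf.expectation (rand_subset V \<theta>) g = measure_pmf.expectation P (\<lambda>f. g {v\<in>V. f v})" for g :: "_ \<Rightarrow> real"
    unfolding rand_subset_def P_def by (simp only: integral_map_pmf)
  have card_eq: "real (card {v\<in>V. f v}) = (\<Sum>v\<in>V. of_bool (f v))" for f
    using finV by (simp add: sum.If_cases Int_def)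
  have i: "measure_pmf.expectation (rand_subset V \<theta>) (\<lambda>S. real (card S)) = t"
    unfolding map card_eq t_def
    by (subst Bochner_Integration.integral_sum) (auto intro: int simp: E1 intro!: sum.cong)
  have ind_eq: "Induced W {v\<in>V. f v} = (\<Sum>u\<in>V. \<Sum>v\<in>V. W u v * (of_bool (f u) * of_bool (f v)))" for f
    unfolding Induced_def sum_filter_of_bool[OF finV] sum_distrib_left
    by (intro sum.cong refl) (simp add: mult_ac)
  have EI: "measure_pmf.expectation (rand_subset V \<theta>) (\<lambda>S. Induced W S) = (\<Sum>u\<in>V. \<Sum>v\<in>V. W u v * e u v)"
    unfolding map ind_eq
    by (subst Bochner_Integration.integral_sum, rule int, intro sum.cong refl, subst Bochner_Integration.integral_sum, rule int, intro sum.cong refl, rule E3) auto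
  have "(\<Sum>u\<in>V. \<Sum>v\<in>V. W u v * e u v) \<le> (\<Sum>u\<in>V. \<Sum>v\<in>V. (if u = v then \<theta> u else 0) + \<theta> u * \<theta> v)"
  proof (intro sum_mono)
    fix u v assume uv: "u \<in> V" "v \<in> V"
    show "W u v * e u v \<le> (if u = v then \<theta> u else 0) + \<theta> u * \<theta> v"
    proof (cases "u = v")
      case True thus ?thesis using W_diag \<theta>_range uv by (simp add: e_def)
    next
      case False
      have "0 \<le> \<theta> u * \<theta> v" using \<theta>_range uv by simp
      hence "W u v * (\<theta> u * \<theta> v) \<le> 1 * (\<theta> u * \<theta> v)"
        using W_range uv by (intro mult_right_mono) auto
      thus ?thesis using False by (simp add: e_def)
    qed
  qed
  also have "\<dots> = t + t^2"
    using finV by (simp add: sum.distrib t_def power2_eq_square sum_distrib_left sum_distrib_right mult.commute)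
  finally have ii: "measure_pmf.expectation (rand_subset V \<theta>) (\<lambda>S. Induced W S) \<le> t^2 + t"
    using EI by simp
  have cut_eq: "Cut W {v\<in>V. f v} (V - {v\<in>V. f v}) = (\<Sum>u\<in>V. \<Sum>v\<in>V. W u v * (of_bool (f u) * (1 - of_bool (f v))))" for f
  proof -
    have cmp: "V - {v\<in>V. f v} = {v\<in>V. \<not> f v}" by auto
    show ?thesis
      unfolding cmp Cut_def sum_filter_of_bool[OF finV] sum_distrib_left
      by (intro sum.cong refl) (cases "f u"; cases "f v"; simp)
  qed
  have EC: "measure_pmf.expectation (rand_subset V \<theta>) (\<lambda>S. Cut W S (V - S)) = (\<Sum>u\<in>V. \<Sum>v\<in>V. W u v * (\<theta> u - e u v))"
    unfolding map cut_eq
    by (subst Bochner_Integration.integral_sum, rule int, intro sum.cong refl, subst Bochner_Integration.integral_sum, rule int, intro sum.cong refl, rule E4) auto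
  also have "\<dots> = (\<Sum>v\<in>V. \<Sum>u\<in>V. W v u * (\<theta> u - e u v))"
    by (subst sum.swap) (intro sum.cong refl, use W_sym in auto)
  also have "\<dots> \<ge> (\<Sum>v\<in>V. 1 - 2 * \<theta> v)"
  proof (intro sum_mono)
    fix v assume v: "v \<in> V"
    define S where "S = (\<Sum>u\<in>V. W v u * \<theta> u)"
    have pt: "W v u * (\<theta> u - e u v) = (1 - \<theta> v) * (W v u * \<theta> u) - (if u = v then \<theta> v * (1 - \<theta> v) else 0)"
      if "u \<in> V" for u
      using W_diag v by (auto simp: e_def algebra_simps)
    have "(\<Sum>u\<in>V. W v u * (\<theta> u - e u v)) = (1 - \<theta> v) * S - \<theta> v * (1 - \<theta> v)"
      unfolding S_def using finV v
      by (simp add: sum.cong[OF refl pt] sum_subtractf sum_distrib_left)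
    moreover have "S \<ge> 1" using cover v S_def by auto
    moreover have "0 \<le> 1 - \<theta> v" using \<theta>_range v by auto
    moreover have "(1 - \<theta> v) * 1 \<le> (1 - \<theta> v) * S"
      using calculation by (intro mult_left_mono) auto
    ultimately have "(\<Sum>u\<in>V. W v u * (\<theta> u - e u v)) \<ge> (1 - \<theta> v) * 1 - \<theta> v * (1 - \<theta> v)"
      by linarith
    moreover have "(1 - \<theta> v) * 1 - \<theta> v * (1 - \<theta> v) \<ge> 1 - 2 * \<theta> v"
      by (simp add: algebra_simps)
    ultimately show "1 - 2 * \<theta> v \<le> (\<Sum>u\<in>V. W v u * (\<theta> u - e u v))" by linarith
  qed
  also have "(\<Sum>v\<in>V. 1 - 2 * \<theta> v) = real (card V) - 2 * t"
    by (simp add: sum_subtractf t_def sum_distrib_left)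
  finally have iii: "measure_pmf.expectation (rand_subset V \<theta>) (\<lambda>S. Cut W S (V - S)) \<ge> real (card V) - 2 * t" .
  show ?thesis unfolding abs_t using i ii iii by simp
qed

end
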